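(* Let $\frac n5\le k<\frac n2$ and $\delta\in(0,1)$. There is a universal constant $C>0$ such that if $n$ is sufficiently large depending only on $\delta$, then $$\sup_{\theta\in\mathbb{R},\ \eta\in\mathbb{R}^n,\ \sigma>0,\ |\mathcal O|\le k}P_{\theta,\eta,\sigma}\left\{\big|\operatorname{median}(X_1,\dots,X_n)-\theta\big|>C\sigma\sqrt{\log\Big(\frac{en}{n-2k}\Big)}\right\}\le\delta .$$
   Context: Huber contamination model (deterministic version): $\{1,\dots,n\}$ is partitioned into a fixed inlier set $\mathcal I$ and a fixed outlier set $\mathcal O$ with $|\mathcal O|\le k$; the $X_j$ are independent with $X_j\sim N(\theta,\sigma^2)$ for $j\in\mathcal I$ and $X_j=\eta_j$ (a point mass at a fixed arbitrary value $\eta_j\in\mathbb{R}$) for $j\in\mathcal O$. $P_{\theta,\eta,\sigma}$ is the resulting joint law. $\operatorname{median}$ denotes the sample median (for even $n$, any point between the two middle order statistics). *)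

theory Defs
  imports "HOL-Probability.Probability"
begin

text \<open>For odd n this is
  exactly the middle order statistic; for even n it is any point of the closed interval
  between the two middle order statistics.\<close>
definition is_sample_median :: "nat \<Rightarrow> (nat \<Rightarrow> real) \<Rightarrow> real \<Rightarrow> bool" where
  "is_sample_median n x m \<longleftrightarrow>
     2 * card {i \<in> {..<n}. x i < m} \<le> n \<and> 2 * card {i \<in> {..<n}. m < x i} \<le> n"

definition huber_model ::
  "nat \<Rightarrow> nat set \<Rightarrow> real \<Rightarrow> (nat \<Rightarrow> real) \<Rightarrow> real \<Rightarrow> (nat \<Rightarrow> real) measure" where
  "huber_model n Out \<theta> \<eta> \<sigma> =
     PiM {..<n} (\<lambda>j. if j \<in> Out then return borel (\<eta> j)
                     else density lborel (normal_density \<theta> \<sigma>))"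

end

theory Submission
  imports Defs
begin

lemma gauss_tail_up:
  assumes "\<sigma> > 0" "s \<ge> 0"
  shows "emeasure (density lborel (normal_density \<theta> \<sigma>)) {y. \<theta> + s < y} \<le> ennreal (exp (-(s\<^sup>2)/(2*\<sigma>\<^sup>2)))"
proof -
  have "emeasure (density lborel (normal_density \<theta> \<sigma>)) {y. \<theta> + s < y}
      = (\<integral>\<^sup>+ y. ennreal (normal_density \<theta> \<sigma> y) * indicator {y. \<theta> + s < y} y \<partial>lborel)"
    by (subst emeasure_density) auto
  also have "\<dots> \<le> (\<integral>\<^sup>+ y. ennreal (exp (-(s\<^sup>2)/(2*\<sigma>\<^sup>2))) * ennreal (normal_density (\<theta>+s) \<sigma> y) \<partial>lborel)"
  proof (intro nn_integral_mono)
    fix y :: real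
    show "ennreal (normal_density \<theta> \<sigma> y) * indicator {y. \<theta> + s < y} y
        \<le> ennreal (exp (-(s\<^sup>2)/(2*\<sigma>\<^sup>2))) * ennreal (normal_density (\<theta>+s) \<sigma> y)"
    proof (cases "\<theta> + s < y")
      case True
      have "(y-\<theta>)\<^sup>2 \<ge> s\<^sup>2 + (y - (\<theta>+s))\<^sup>2" using True assms mult_nonneg_nonneg[of s "y-\<theta>-s"] by (simp add: power2_eq_square algebra_simps)
      then have "-(y-\<theta>)\<^sup>2/(2*\<sigma>\<^sup>2) \<le> -(s\<^sup>2)/(2*\<sigma>\<^sup>2) + -(y-(\<theta>+s))\<^sup>2/(2*\<sigma>\<^sup>2)"
        using assms by (simp add: divide_simps)
      then have "exp (-(y-\<theta>)\<^sup>2/(2*\<sigma>\<^sup>2)) \<le> exp (-(s\<^sup>2)/(2*\<sigma>\<^sup>2)) * exp (-(y-(\<theta>+s))\<^sup>2/(2*\<sigma>\<^sup>2))"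
        by (simp add: exp_add[symmetric])
      then have "normal_density \<theta> \<sigma> y \<le> exp (-(s\<^sup>2)/(2*\<sigma>\<^sup>2)) * normal_density (\<theta>+s) \<sigma> y"
        unfolding normal_density_def by (simp add: divide_right_mono)
      then show ?thesis using True by (simp add: ennreal_mult[symmetric])
    qed simp
  qed
  also have "\<dots> = ennreal (exp (-(s\<^sup>2)/(2*\<sigma>\<^sup>2))) * (\<integral>\<^sup>+ y. ennreal (normal_density (\<theta>+s) \<sigma> y) \<partial>lborel)"
    by (rule nn_integral_cmult) auto
  also have "(\<integral>\<^sup>+ y. ennreal (normal_density (\<theta>+s) \<sigma> y) \<partial>lborel) = 1"
    using assms by (subst nn_integral_eq_integral) (auto intro: integrable_normal_density)
  finally show ?thesis by simp
qed

lemma gauss_tail_low: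
  assumes "\<sigma> > 0" "s \<ge> 0"
  shows "emeasure (density lborel (normal_density \<theta> \<sigma>)) {y. y < \<theta> - s} \<le> ennreal (exp (-(s\<^sup>2)/(2*\<sigma>\<^sup>2)))"
proof -
  have "emeasure (density lborel (normal_density \<theta> \<sigma>)) {y. y < \<theta> - s}
      = (\<integral>\<^sup>+ y. ennreal (normal_density \<theta> \<sigma> y) * indicator {y. y < \<theta> - s} y \<partial>lborel)"
    by (subst emeasure_density) auto
  also have "\<dots> \<le> (\<integral>\<^sup>+ y. ennreal (exp (-(s\<^sup>2)/(2*\<sigma>\<^sup>2))) * ennreal (normal_density (\<theta>-s) \<sigma> y) \<partial>lborel)"
  proof (intro nn_integral_mono)
    fix y :: real
    show "ennreal (normal_density \<theta> \<sigma> y) * indicator {y. y < \<theta> - s} y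
        \<le> ennreal (exp (-(s\<^sup>2)/(2*\<sigma>\<^sup>2))) * ennreal (normal_density (\<theta>-s) \<sigma> y)"
    proof (cases "y < \<theta> - s")
      case True
      have "(y-\<theta>)\<^sup>2 \<ge> s\<^sup>2 + (y - (\<theta>-s))\<^sup>2" using True assms mult_nonneg_nonneg[of s "\<theta>-s-y"] by (simp add: power2_eq_square algebra_simps)
      then have "-(y-\<theta>)\<^sup>2/(2*\<sigma>\<^sup>2) \<le> -(s\<^sup>2)/(2*\<sigma>\<^sup>2) + -(y-(\<theta>-s))\<^sup>2/(2*\<sigma>\<^sup>2)"
        using assms by (simp add: divide_simps)
      then have "exp (-(y-\<theta>)\<^sup>2/(2*\<sigma>\<^sup>2)) \<le> exp (-(s\<^sup>2)/(2*\<sigma>\<^sup>2)) * exp (-(y-(\<theta>-s))\<^sup>2/(2*\<sigma>\<^sup>2))"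
        by (simp add: exp_add[symmetric])
      then have "normal_density \<theta> \<sigma> y \<le> exp (-(s\<^sup>2)/(2*\<sigma>\<^sup>2)) * normal_density (\<theta>-s) \<sigma> y"
        unfolding normal_density_def by (simp add: divide_right_mono)
      then show ?thesis using True by (simp add: ennreal_mult[symmetric])
    qed simp
  qed
  also have "\<dots> = ennreal (exp (-(s\<^sup>2)/(2*\<sigma>\<^sup>2))) * (\<integral>\<^sup>+ y. ennreal (normal_density (\<theta>-s) \<sigma> y) \<partial>lborel)"
    by (rule nn_integral_cmult) auto
  also have "(\<integral>\<^sup>+ y. ennreal (normal_density (\<theta>-s) \<sigma> y) \<partial>lborel) = 1"
    using assms by (subst nn_integral_eq_integral) (auto intro: integrable_normal_density)
  finally show ?thesis by simp
qed

lemma med_up: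
  assumes "is_sample_median n x m" "n > 0"
  shows "\<exists>i<n. is_sample_median n x (x i) \<and> m \<le> x i"
proof -
  let ?V = "{i\<in>{..<n}. m \<le> x i}"
  have ne: "?V \<noteq> {}"
  proof
    assume "?V = {}"
    then have "{i\<in>{..<n}. x i < m} = {..<n}" by force
    then show False using assms unfolding is_sample_median_def by auto
  qed
  have fin: "finite (x ` ?V)" by auto
  define m' where "m' = Min (x ` ?V)"
  have "m' \<in> x ` ?V" unfolding m'_def using ne fin by (intro Min_in) auto
  then obtain i where i: "i < n" "m \<le> x i" "x i = m'" by auto
  have le: "\<And>j. j < n \<Longrightarrow> m \<le> x j \<Longrightarrow> m' \<le> x j" unfolding m'_def using fin by auto
  have "{j\<in>{..<n}. x j < m'} = {j\<in>{..<n}. x j < m}"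
    using le i by force
  moreover have "{j\<in>{..<n}. m' < x j} \<subseteq> {j\<in>{..<n}. m < x j}" using i by auto
  then have "card {j\<in>{..<n}. m' < x j} \<le> card {j\<in>{..<n}. m < x j}" by (intro card_mono) auto
  ultimately show ?thesis using assms i unfolding is_sample_median_def by (intro exI[of _ i]) auto
qed

lemma med_down:
  assumes "is_sample_median n x m" "n > 0"
  shows "\<exists>i<n. is_sample_median n x (x i) \<and> x i \<le> m"
proof -
  let ?V = "{i\<in>{..<n}. x i \<le> m}"
  have ne: "?V \<noteq> {}"
  proof
    assume "?V = {}"
    then have "{i\<in>{..<n}. m < x i} = {..<n}" by force
    then show False using assms unfolding is_sample_median_def by auto
  qed
  have fin: "finite (x ` ?V)" by auto
  define m' where "m' = Max (x ` ?V)"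
  have "m' \<in> x ` ?V" unfolding m'_def using ne fin by (intro Max_in) auto
  then obtain i where i: "i < n" "x i \<le> m" "x i = m'" by auto
  have le: "\<And>j. j < n \<Longrightarrow> x j \<le> m \<Longrightarrow> x j \<le> m'" unfolding m'_def using fin by auto
  have "{j\<in>{..<n}. m' < x j} = {j\<in>{..<n}. m < x j}"
    using le i by force
  moreover have "{j\<in>{..<n}. x j < m'} \<subseteq> {j\<in>{..<n}. x j < m}" using i by auto
  then have "card {j\<in>{..<n}. x j < m'} \<le> card {j\<in>{..<n}. x j < m}" by (intro card_mono) auto
  ultimately show ?thesis using assms i unfolding is_sample_median_def by (intro exI[of _ i]) auto
qed

lemma chernoff:
  fixes Mi :: "nat \<Rightarrow> real measure" and B :: "real set"
  assumes ps: "\<And>i. prob_space (Mi i)" and sb: "\<And>i. sets (Mi i) = sets borel"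
    and B: "B \<in> sets borel" and J: "J \<subseteq> {..<n}"
    and q: "\<And>i. i\<in>J \<Longrightarrow> emeasure (Mi i) B \<le> ennreal q" and q0: "q \<ge> 0" and l0: "l \<ge> 0"
  shows "emeasure (PiM {..<n} Mi) {x \<in> space (PiM {..<n} Mi). t \<le> real (card {i\<in>J. x i \<in> B})}
           \<le> ennreal (exp (- l * t + real n * exp l * q))"
proof -
  interpret P: product_prob_space Mi "{..<n}"
    by (simp add: product_prob_space_def product_prob_space_axioms_def product_sigma_finite_def ps prob_space_imp_sigma_finite)
  have finJ: "finite J" using J finite_subset by auto
  define cnt where "cnt x = (\<Sum>i\<in>J. indicator B (x i) :: real)" for x :: "nat \<Rightarrow> real"
  have cnt_eq: "cnt x = real (card {i\<in>J. x i \<in> B})" for x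
  proof -
    have "cnt x = (\<Sum>i\<in>{i\<in>J. x i \<in> B}. 1)"
      unfolding cnt_def using finJ by (intro sum.mono_neutral_cong_right) (auto simp: indicator_def)
    then show ?thesis by simp
  qed
  have Bm: "\<And>i. indicator B \<in> borel_measurable (Mi i)"
    using B sb by (simp add: measurable_cong_sets[OF sb refl])
  have comp: "\<And>i. i \<in> J \<Longrightarrow> (\<lambda>x. indicator B (x i) :: real) \<in> borel_measurable (PiM {..<n} Mi)"
    proof -
    fix i assume "i \<in> J"
    then have "i \<in> {..<n}" using J by auto
    then show "(\<lambda>x. indicator B (x i) :: real) \<in> borel_measurable (PiM {..<n} Mi)"
      using measurable_compose[where f="\<lambda>x. x i" and g="indicator B", OF measurable_component_singleton[of i "{..<n}" Mi] Bm[of i]] by simp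
  qed
  have cntm: "cnt \<in> borel_measurable (PiM {..<n} Mi)"
    unfolding cnt_def using comp by (intro borel_measurable_sum) auto
  define A where "A = {x \<in> space (PiM {..<n} Mi). t \<le> cnt x}"
  have Aeq: "{x \<in> space (PiM {..<n} Mi). t \<le> real (card {i\<in>J. x i \<in> B})} = A"
    unfolding A_def cnt_eq by simp
  have Am: "A \<in> sets (PiM {..<n} Mi)" unfolding A_def using cntm by measurable
  define g where "g i y = (if i \<in> J then exp (l * indicator B y) else 1 :: real)" for i y
  have gm: "\<And>i. (\<lambda>y. ennreal (g i y)) \<in> borel_measurable (Mi i)"
    unfolding g_def using Bm by measurable
  have prodg: "(\<Prod>i\<in>{..<n}. g i (x i)) = exp (l * cnt x)" for x
  proof -
    have "(\<Prod>i\<in>{..<n}. g i (x i)) = (\<Prod>i\<in>J. exp (l * indicator B (x i)))"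
      unfolding g_def using J by (intro prod.mono_neutral_cong_right) auto
    also have "\<dots> = exp (\<Sum>i\<in>J. l * indicator B (x i))"
      by (rule exp_sum[OF finJ, symmetric])
    also have "\<dots> = exp (l * cnt x)"
      by (simp only: cnt_def sum_distrib_left)
    finally show ?thesis .
  qed
  have "emeasure (PiM {..<n} Mi) A = (\<integral>\<^sup>+ x. indicator A x \<partial>PiM {..<n} Mi)"
    using Am by simp
  also have "\<dots> \<le> (\<integral>\<^sup>+ x. ennreal (exp (- l * t)) * (\<Prod>i\<in>{..<n}. ennreal (g i (x i))) \<partial>PiM {..<n} Mi)"
  proof (intro nn_integral_mono)
    fix x assume x: "x \<in> space (PiM {..<n} Mi)"
    have "(\<Prod>i\<in>{..<n}. ennreal (g i (x i))) = ennreal (exp (l * cnt x))"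
      by (subst prod_ennreal) (auto simp: g_def prodg[unfolded g_def])
    moreover have "indicator A x \<le> ennreal (exp (- l * t) * exp (l * cnt x))"
    proof (cases "x \<in> A")
      case True
      then have "t \<le> cnt x" unfolding A_def by auto
      then have "0 \<le> - l * t + l * cnt x" using l0 by (simp add: algebra_simps mult_left_mono)
      then have "1 \<le> exp (- l * t + l * cnt x)" by simp
      then have "1 \<le> exp (- l * t) * exp (l * cnt x)" by (simp only: exp_add[symmetric])
      then show ?thesis using True by simp
    qed simp
    ultimately show "indicator A x \<le> ennreal (exp (- l * t)) * (\<Prod>i\<in>{..<n}. ennreal (g i (x i)))"
      by (simp add: ennreal_mult)
  qed
  also have "\<dots> = ennreal (exp (- l * t)) * (\<integral>\<^sup>+ x. (\<Prod>i\<in>{..<n}. ennreal (g i (x i))) \<partial>PiM {..<n} Mi)"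
    by (rule nn_integral_cmult) (use gm in measurable)
  also have "(\<integral>\<^sup>+ x. (\<Prod>i\<in>{..<n}. ennreal (g i (x i))) \<partial>PiM {..<n} Mi)
      = (\<Prod>i\<in>{..<n}. \<integral>\<^sup>+ y. ennreal (g i y) \<partial>Mi i)"
    by (rule P.product_nn_integral_prod) (use gm in auto)
  also have "\<dots> \<le> (\<Prod>i\<in>{..<n}. ennreal (1 + exp l * q))"
  proof (intro prod_mono_ennreal)
    fix i assume "i \<in> {..<n}"
    show "(\<integral>\<^sup>+ y. ennreal (g i y) \<partial>Mi i) \<le> ennreal (1 + exp l * q)"
    proof (cases "i \<in> J")
      case False
      then have "(\<integral>\<^sup>+ y. ennreal (g i y) \<partial>Mi i) = 1" by (simp add: g_def prob_space.emeasure_space_1[OF ps])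
      then show ?thesis using q0 by simp
    next
      case True
      have Bs: "B \<in> sets (Mi i)" using B sb by simp
      have "(\<integral>\<^sup>+ y. ennreal (g i y) \<partial>Mi i) \<le> (\<integral>\<^sup>+ y. 1 + ennreal (exp l) * indicator B y \<partial>Mi i)"
        using True by (intro nn_integral_mono) (auto simp: g_def indicator_def)
      also have "\<dots> = (\<integral>\<^sup>+ y. 1 \<partial>Mi i) + (\<integral>\<^sup>+ y. ennreal (exp l) * indicator B y \<partial>Mi i)"
        using Bs by (intro nn_integral_add) auto
      also have "\<dots> = 1 + ennreal (exp l) * emeasure (Mi i) B"
        using Bs by (simp add: prob_space.emeasure_space_1[OF ps] nn_integral_cmult_indicator)
      also have "\<dots> \<le> 1 + ennreal (exp l) * ennreal q"
        using q[OF True] by (intro add_mono mult_left_mono) auto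
      also have "\<dots> = ennreal (1 + exp l * q)" using q0 by (simp add: ennreal_mult[symmetric] ennreal_plus[symmetric])
      finally show ?thesis .
    qed
  qed
  also have "(\<Prod>i\<in>{..<n}. ennreal (1 + exp l * q)) = ennreal ((1 + exp l * q) ^ n)"
    using q0 by (simp add: ennreal_power[symmetric] ennreal_plus[symmetric] del: ennreal_plus)
  also have "\<dots> \<le> ennreal (exp (real n * exp l * q))"
  proof -
    have "(1 + exp l * q) ^ n \<le> exp (exp l * q) ^ n"
      using q0 by (intro power_mono) auto
    also have "\<dots> = exp (real n * exp l * q)" by (simp add: exp_of_nat_mult[symmetric] mult.assoc)
    finally show ?thesis by simp
  qed
  finally have "emeasure (PiM {..<n} Mi) A \<le> ennreal (exp (- l * t)) * ennreal (exp (real n * exp l * q))"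
    by (simp add: mult_left_mono)
  also have "\<dots> = ennreal (exp (- l * t + real n * exp l * q))"
    by (simp add: ennreal_mult[symmetric] exp_diff exp_minus field_simps)
  finally show ?thesis using Aeq by simp
qed

lemma card_sum_real: fixes n :: nat shows "real (card {j\<in>{..<n}. P j}) = (\<Sum>j<n. if P j then 1 else 0 :: real)"
proof -
  have "(\<Sum>j<n. if P j then 1 else 0 :: real) = (\<Sum>j\<in>{j\<in>{..<n}. P j}. 1)"
    by (rule sum.inter_filter[symmetric]) simp
  then show ?thesis by simp
qed

lemma E_meas:
  fixes Mi :: "nat \<Rightarrow> real measure"
  assumes sb: "\<And>i. sets (Mi i) = sets borel"
  shows "{x \<in> space (PiM {..<n} Mi). \<exists>i<n. is_sample_median n x (x i) \<and> T < \<bar>x i - \<theta>\<bar>} \<in> sets (PiM {..<n} Mi)"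
proof -
  have comp: "(\<lambda>x. x j) \<in> borel_measurable (PiM {..<n} Mi)" if "j < n" for j
    using measurable_component_singleton[of j "{..<n}" Mi] that sb by (simp add: measurable_cong_sets[OF refl sb])
  have "{x \<in> space (PiM {..<n} Mi). \<exists>i<n. is_sample_median n x (x i) \<and> T < \<bar>x i - \<theta>\<bar>}
     = (\<Union>i<n. {x \<in> space (PiM {..<n} Mi). 2 * (\<Sum>j<n. if x j < x i then 1 else 0 :: real) \<le> real n
            \<and> 2 * (\<Sum>j<n. if x i < x j then 1 else 0 :: real) \<le> real n \<and> T < \<bar>x i - \<theta>\<bar>})"
    unfolding is_sample_median_def card_sum_real[symmetric] by auto
  also have "\<dots> \<in> sets (PiM {..<n} Mi)"
  proof (intro sets.finite_UN finite_lessThan)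
    fix i assume i: "i \<in> {..<n}"
    have ci[measurable]: "(\<lambda>x. x i) \<in> borel_measurable (PiM {..<n} Mi)" using comp i by auto
    have s1[measurable]: "(\<lambda>x. (\<Sum>j<n. if x j < x i then 1 else 0 :: real)) \<in> borel_measurable (PiM {..<n} Mi)"
    proof (intro borel_measurable_sum)
      fix j assume "j \<in> {..<n}"
      then have cj[measurable]: "(\<lambda>x. x j) \<in> borel_measurable (PiM {..<n} Mi)" using comp by auto
      show "(\<lambda>x. if x j < x i then 1 else 0 :: real) \<in> borel_measurable (PiM {..<n} Mi)" by measurable
    qed
    have s2[measurable]: "(\<lambda>x. (\<Sum>j<n. if x i < x j then 1 else 0 :: real)) \<in> borel_measurable (PiM {..<n} Mi)"
    proof (intro borel_measurable_sum)
      fix j assume "j \<in> {..<n}"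
      then have cj[measurable]: "(\<lambda>x. x j) \<in> borel_measurable (PiM {..<n} Mi)" using comp by auto
      show "(\<lambda>x. if x i < x j then 1 else 0 :: real) \<in> borel_measurable (PiM {..<n} Mi)" by measurable
    qed
    show "{x \<in> space (PiM {..<n} Mi). 2 * (\<Sum>j<n. if x j < x i then 1 else 0 :: real) \<le> real n
            \<and> 2 * (\<Sum>j<n. if x i < x j then 1 else 0 :: real) \<le> real n \<and> T < \<bar>x i - \<theta>\<bar>} \<in> sets (PiM {..<n} Mi)"
      by measurable
  qed
  finally show ?thesis .
qed

lemma count_lemma:
  fixes x :: "nat \<Rightarrow> real"
  assumes "Out \<subseteq> {..<n}" "card Out \<le> k" "{j\<in>{..<n} - Out. x j \<notin> B} \<subseteq> S" "S \<subseteq> {..<n}" "2 * card S \<le> n"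
  shows "n \<le> 2 * card {j\<in>{..<n} - Out. x j \<in> B} + 2 * k"
proof -
  have fO: "finite Out" using assms(1) finite_subset by auto
  have "card ({..<n} - Out) = n - card Out" using assms(1) fO by (simp add: card_Diff_subset)
  moreover have "{..<n} - Out = {j\<in>{..<n} - Out. x j \<in> B} \<union> {j\<in>{..<n} - Out. x j \<notin> B}" by auto
  then have "card ({..<n} - Out) \<le> card {j\<in>{..<n} - Out. x j \<in> B} + card {j\<in>{..<n} - Out. x j \<notin> B}"
    by (metis card_Un_le)
  moreover have "card {j\<in>{..<n} - Out. x j \<notin> B} \<le> card S"
    using assms(3,4) by (intro card_mono) (auto intro: finite_subset)
  ultimately show ?thesis using assms(2,5) by linarith
qed

lemma key_ineq:
  fixes n r :: real
  assumes "1 \<le> r" "r \<le> n"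
  shows "1 + ln n \<le> r * ln (exp 1 * n / r)"
proof -
  have L: "ln (exp 1 * n / r) = 1 + ln n - ln r" using assms by (simp add: ln_div ln_mult)
  have "ln r \<le> r - 1" using assms by (intro ln_le_minus_one) auto
  moreover have "ln r \<le> ln n" using assms by simp
  moreover have "0 \<le> ln r" using assms by simp
  moreover have "(r - 1) * (1 + ln r) \<le> (r - 1) * (1 + ln n)" using assms calculation by (intro mult_left_mono) auto
  ultimately show ?thesis unfolding L by (simp add: algebra_simps)
qed

lemma tail_value:
  fixes n r L :: real
  assumes "1 \<le> r" "r \<le> n" "L = ln (exp 1 * n / r)"
  shows "exp (- (4 * L) * (r / 2) + n * exp (4 * L) * exp (- (8 * L))) \<le> 1 / (2 * n)"
proof -
  have n0: "n > 0" using assms by auto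
  have z: "exp 1 * n / r > 0" using assms by auto
  have eL: "exp (- L) = r / (exp 1 * n)" using z assms(3) by (simp add: exp_minus exp_ln)
  have L1: "L \<ge> 1"
  proof -
    have "exp 1 \<le> exp 1 * n / r" using assms by (simp add: field_simps)
    then have "ln (exp 1) \<le> ln (exp 1 * n / r)" using z by (subst ln_le_cancel_iff) auto
    then show ?thesis using assms by simp
  qed
  have a: "exp (4 * L) * exp (- (8 * L)) = exp (- L) ^ 4"
    by (simp add: exp_add[symmetric] exp_of_nat_mult[symmetric])
  have "exp (- L) ^ 4 \<le> exp (- L) ^ 1"
    using L1 by (intro power_decreasing) auto
  then have "n * (exp (4 * L) * exp (- (8 * L))) \<le> n * exp (- L)"
    unfolding a using n0 by (intro mult_left_mono) auto
  also have "n * exp (- L) = r / exp 1" unfolding eL using n0 by simp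
  also have "\<dots> \<le> r" using assms by (simp add: divide_le_eq)
  also have "\<dots> \<le> r * L" using L1 assms by simp
  finally have b: "n * exp (4 * L) * exp (- (8 * L)) \<le> r * L" by (simp add: mult.assoc)
  have c: "1 + ln n \<le> r * L" using key_ineq[OF assms(1,2)] assms(3) by simp
  have "exp (- (4 * L) * (r / 2) + n * exp (4 * L) * exp (- (8 * L))) \<le> exp (- (1 + ln n))"
    using b c by (simp add: algebra_simps)
  also have "\<dots> = 1 / (exp 1 * n)" using n0 by (simp add: exp_minus exp_add exp_diff field_simps)
  also have "\<dots> \<le> 1 / (2 * n)" using n0 exp_ge_add_one_self[of 1]
    by (intro divide_left_mono mult_right_mono) auto
  finally show ?thesis .
qed

lemma count_meas:
  fixes Mi :: "nat \<Rightarrow> real measure" and B :: "real set"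
  assumes sb: "\<And>i. sets (Mi i) = sets borel"
    and B: "B \<in> sets borel" and J: "J \<subseteq> {..<n}"
  shows "{x \<in> space (PiM {..<n} Mi). t \<le> real (card {i\<in>J. x i \<in> B})} \<in> sets (PiM {..<n} Mi)"
proof -
  have finJ: "finite J" using J finite_subset by auto
  define cnt where "cnt x = (\<Sum>i\<in>J. indicator B (x i) :: real)" for x :: "nat \<Rightarrow> real"
  have cnt_eq: "cnt x = real (card {i\<in>J. x i \<in> B})" for x
  proof -
    have "cnt x = (\<Sum>i\<in>{i\<in>J. x i \<in> B}. 1)"
      unfolding cnt_def using finJ by (intro sum.mono_neutral_cong_right) (auto simp: indicator_def)
    then show ?thesis by simp
  qed
  have Bm: "\<And>i. indicator B \<in> borel_measurable (Mi i)"
    using B sb by (simp add: measurable_cong_sets[OF sb refl])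
  have comp: "\<And>i. i \<in> J \<Longrightarrow> (\<lambda>x. indicator B (x i) :: real) \<in> borel_measurable (PiM {..<n} Mi)"
  proof -
    fix i assume "i \<in> J"
    then have "i \<in> {..<n}" using J by auto
    then show "(\<lambda>x. indicator B (x i) :: real) \<in> borel_measurable (PiM {..<n} Mi)"
      using measurable_compose[where f="\<lambda>x. x i" and g="indicator B", OF measurable_component_singleton[of i "{..<n}" Mi] Bm[of i]] by simp
  qed
  have cntm[measurable]: "cnt \<in> borel_measurable (PiM {..<n} Mi)"
    unfolding cnt_def using comp by (intro borel_measurable_sum) auto
  have "{x \<in> space (PiM {..<n} Mi). t \<le> cnt x} \<in> sets (PiM {..<n} Mi)" by measurable
  then show ?thesis unfolding cnt_eq .
qed

theorem mainTheorem19: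
  shows "\<exists>C::real > 0. \<forall>\<delta>::real. 0 < \<delta> \<and> \<delta> < 1 \<longrightarrow>
    (\<exists>N::nat. \<forall>n k::nat. N \<le> n \<and> real n / 5 \<le> real k \<and> 2 * k < n \<longrightarrow>
      (\<forall>(\<theta>::real) (\<eta>::nat \<Rightarrow> real) (\<sigma>::real) (Out::nat set).
         0 < \<sigma> \<and> Out \<subseteq> {..<n} \<and> card Out \<le> k \<longrightarrow>
         (let M = huber_model n Out \<theta> \<eta> \<sigma>;
              E = {x \<in> space M. \<exists>m. is_sample_median n x m \<and>
                     \<bar>m - \<theta>\<bar> > C * \<sigma> * sqrt (ln (exp 1 * real n / (real n - 2 * real k)))}
          in E \<in> sets M \<and> measure M E \<le> \<delta>)))"
proof (intro exI[of _ "4::real"] conjI allI impI)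
  fix \<delta> :: real assume \<delta>: "0 < \<delta> \<and> \<delta> < 1"
  show "\<exists>N::nat. \<forall>n k::nat. N \<le> n \<and> real n / 5 \<le> real k \<and> 2 * k < n \<longrightarrow>
      (\<forall>(\<theta>::real) (\<eta>::nat \<Rightarrow> real) (\<sigma>::real) (Out::nat set).
         0 < \<sigma> \<and> Out \<subseteq> {..<n} \<and> card Out \<le> k \<longrightarrow>
         (let M = huber_model n Out \<theta> \<eta> \<sigma>;
              E = {x \<in> space M. \<exists>m. is_sample_median n x m \<and>
                     \<bar>m - \<theta>\<bar> > 4 * \<sigma> * sqrt (ln (exp 1 * real n / (real n - 2 * real k)))}
          in E \<in> sets M \<and> measure M E \<le> \<delta>))"
  proof (intro exI[of _ "nat \<lceil>1 / \<delta>\<rceil>"] allI impI)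
    fix n k :: nat and \<theta> :: real and \<eta> :: "nat \<Rightarrow> real" and \<sigma> :: real and Out :: "nat set"
    assume nk: "nat \<lceil>1 / \<delta>\<rceil> \<le> n \<and> real n / 5 \<le> real k \<and> 2 * k < n"
      and hyp: "0 < \<sigma> \<and> Out \<subseteq> {..<n} \<and> card Out \<le> k"
    define Mi where "Mi j = (if j \<in> Out then return borel (\<eta> j) else density lborel (normal_density \<theta> \<sigma>))" for j
    define M where "M = PiM {..<n} Mi"
    have Mdef: "huber_model n Out \<theta> \<eta> \<sigma> = M" unfolding M_def Mi_def huber_model_def by simp
    define r where "r = real n - 2 * real k"
    define L where "L = ln (exp 1 * real n / r)"
    define T where "T = 4 * \<sigma> * sqrt L"
    have \<sigma>: "\<sigma> > 0" using hyp by auto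
    have r1: "1 \<le> r" using nk unfolding r_def by linarith
    have rn: "r \<le> real n" unfolding r_def by simp
    have n0: "real n > 0" using r1 rn by simp
    have L1: "L \<ge> 1"
    proof -
      have "exp 1 \<le> exp 1 * real n / r" using r1 rn by (simp add: field_simps)
      then have "ln (exp 1) \<le> ln (exp 1 * real n / r)" using r1 n0 by (subst ln_le_cancel_iff) auto
      then show ?thesis unfolding L_def by simp
    qed
    have T0: "T \<ge> 0" unfolding T_def using \<sigma> L1 by simp
    have T2: "T\<^sup>2 / (2 * \<sigma>\<^sup>2) = 8 * L" unfolding T_def using \<sigma> L1
      by (simp add: power_mult_distrib power2_eq_square)
    have ps: "\<And>i. prob_space (Mi i)" unfolding Mi_def using \<sigma> by (auto intro: prob_space_return prob_space_normal_density)
    have sb: "\<And>i. sets (Mi i) = sets borel" unfolding Mi_def by auto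
    interpret P: prob_space M unfolding M_def by (intro prob_space_PiM ps)
    define J where "J = {..<n} - Out"
    have J: "J \<subseteq> {..<n}" unfolding J_def by auto
    define Aup where "Aup = {x \<in> space M. r / 2 \<le> real (card {i\<in>J. x i \<in> {y. \<theta> + T < y}})}"
    define Alow where "Alow = {x \<in> space M. r / 2 \<le> real (card {i\<in>J. x i \<in> {y. y < \<theta> - T}})}"
    have bnd: "exp (- (4 * L) * (r / 2) + real n * exp (4 * L) * exp (- (8 * L))) \<le> 1 / (2 * real n)"
      by (rule tail_value[OF r1 rn L_def])
    have up: "emeasure M Aup \<le> ennreal (1 / (2 * real n))"
    proof -
      have "emeasure M Aup \<le> ennreal (exp (- (4 * L) * (r / 2) + real n * exp (4 * L) * exp (- (8 * L))))"
        unfolding Aup_def M_def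
      proof (rule chernoff[OF ps sb _ J])
        fix i assume "i \<in> J"
        then have "Mi i = density lborel (normal_density \<theta> \<sigma>)" unfolding J_def Mi_def by auto
        then show "emeasure (Mi i) {y. \<theta> + T < y} \<le> ennreal (exp (- (8 * L)))"
          using gauss_tail_up[OF \<sigma> T0, of \<theta>] T2 by simp
      qed (use L1 in auto)
      also have "\<dots> \<le> ennreal (1 / (2 * real n))" using bnd by (rule ennreal_leI)
      finally show ?thesis .
    qed
    have low: "emeasure M Alow \<le> ennreal (1 / (2 * real n))"
    proof -
      have "emeasure M Alow \<le> ennreal (exp (- (4 * L) * (r / 2) + real n * exp (4 * L) * exp (- (8 * L))))"
        unfolding Alow_def M_def
      proof (rule chernoff[OF ps sb _ J])
        fix i assume "i \<in> J"
        then have "Mi i = density lborel (normal_density \<theta> \<sigma>)" unfolding J_def Mi_def by auto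
        then show "emeasure (Mi i) {y. y < \<theta> - T} \<le> ennreal (exp (- (8 * L)))"
          using gauss_tail_low[OF \<sigma> T0, of \<theta>] T2 by simp
      qed (use L1 in auto)
      also have "\<dots> \<le> ennreal (1 / (2 * real n))" using bnd by (rule ennreal_leI)
      finally show ?thesis .
    qed
    define E where "E = {x \<in> space M. \<exists>m. is_sample_median n x m \<and> \<bar>m - \<theta>\<bar> > T}"
    have Eeq: "E = {x \<in> space M. \<exists>i<n. is_sample_median n x (x i) \<and> T < \<bar>x i - \<theta>\<bar>}"
    proof (intro set_eqI iffI)
      fix x assume "x \<in> E"
      then obtain m where x: "x \<in> space M" and m: "is_sample_median n x m" "\<bar>m - \<theta>\<bar> > T" unfolding E_def by auto
      have npos: "n > 0" using n0 by simp
      show "x \<in> {x \<in> space M. \<exists>i<n. is_sample_median n x (x i) \<and> T < \<bar>x i - \<theta>\<bar>}"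
      proof (cases "m > \<theta>")
        case True
        obtain i where "i < n" "is_sample_median n x (x i)" "m \<le> x i" using med_up[OF m(1) npos] by auto
        then show ?thesis using x m True by auto
      next
        case False
        obtain i where "i < n" "is_sample_median n x (x i)" "x i \<le> m" using med_down[OF m(1) npos] by auto
        then show ?thesis using x m False by auto
      qed
    qed (auto simp: E_def)
    have Em: "E \<in> sets M" unfolding Eeq M_def by (rule E_meas[OF sb])
    have Esub: "E \<subseteq> Aup \<union> Alow"
    proof
      fix x assume "x \<in> E"
      then obtain i where x: "x \<in> space M" and i: "i < n" "is_sample_median n x (x i)" "T < \<bar>x i - \<theta>\<bar>"
        unfolding Eeq by auto
      show "x \<in> Aup \<union> Alow"
      proof (cases "x i > \<theta>")
        case True
        have "n \<le> 2 * card {j\<in>{..<n} - Out. x j \<in> {y. \<theta> + T < y}} + 2 * k"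
        proof (rule count_lemma[where S = "{j\<in>{..<n}. x j < x i}"])
          show "{j \<in> {..<n} - Out. x j \<notin> {y. \<theta> + T < y}} \<subseteq> {j \<in> {..<n}. x j < x i}"
            using True i by auto
        qed (use hyp i in \<open>auto simp: is_sample_median_def\<close>)
        then have "real n \<le> real (2 * card {j\<in>{..<n} - Out. x j \<in> {y. \<theta> + T < y}} + 2 * k)"
          by (simp only: of_nat_le_iff)
        then have "r / 2 \<le> real (card {j\<in>J. x j \<in> {y. \<theta> + T < y}})"
          unfolding r_def J_def by simp
        then show ?thesis using x unfolding Aup_def by auto
      next
        case False
        have "n \<le> 2 * card {j\<in>{..<n} - Out. x j \<in> {y. y < \<theta> - T}} + 2 * k"
        proof (rule count_lemma[where S = "{j\<in>{..<n}. x i < x j}"])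
          show "{j \<in> {..<n} - Out. x j \<notin> {y. y < \<theta> - T}} \<subseteq> {j \<in> {..<n}. x i < x j}"
            using False i by auto
        qed (use hyp i in \<open>auto simp: is_sample_median_def\<close>)
        then have "real n \<le> real (2 * card {j\<in>{..<n} - Out. x j \<in> {y. y < \<theta> - T}} + 2 * k)"
          by (simp only: of_nat_le_iff)
        then have "r / 2 \<le> real (card {j\<in>J. x j \<in> {y. y < \<theta> - T}})"
          unfolding r_def J_def by simp
        then show ?thesis using x unfolding Alow_def by auto
      qed
    qed
    have Aupm: "Aup \<in> sets M" unfolding Aup_def M_def by (rule count_meas[OF sb _ J]) auto
    have Alowm: "Alow \<in> sets M" unfolding Alow_def M_def by (rule count_meas[OF sb _ J]) auto
    have "measure M E \<le> measure M (Aup \<union> Alow)"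
      using Esub Aupm Alowm by (intro P.finite_measure_mono) auto
    also have "\<dots> \<le> measure M Aup + measure M Alow"
      using Aupm Alowm by (intro measure_Un_le) auto
    also have "\<dots> \<le> 1 / (2 * real n) + 1 / (2 * real n)"
      using up low n0 by (intro add_mono) (auto simp: P.emeasure_eq_measure ennreal_le_iff)
    also have "\<dots> = 1 / real n" by simp
    also have "\<dots> \<le> \<delta>"
    proof -
      have "1 / \<delta> \<le> real n" using nk by linarith
      then show ?thesis using \<delta> n0 by (simp add: field_simps)
    qed
    finally have "measure M E \<le> \<delta>" .
    then show "let M = huber_model n Out \<theta> \<eta> \<sigma>;
              E = {x \<in> space M. \<exists>m. is_sample_median n x m \<and>
                     \<bar>m - \<theta>\<bar> > 4 * \<sigma> * sqrt (ln (exp 1 * real n / (real n - 2 * real k)))}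
          in E \<in> sets M \<and> measure M E \<le> \<delta>"
      using Em unfolding Mdef E_def T_def L_def r_def Let_def by simp
  qed
qed simp

end
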